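(* Let $M$ be a finite monoid and let $J$ and $J'$ be two $\mathscr{J}$-classes of $M$ such that $A(J)=A(J')$. Then the relation $\theta_J\cup\theta_{J'}$ is a congruence of $M$.
   Context: Green's relations on $M$: $a\mathscr{H}b$ iff $Ma=Mb$ and $aM=bM$; $a\mathscr{J}b$ iff $MaM=MbM$. $J_a$ is the $\mathscr{J}$-class of $a$; $J_a\leqslant_{\mathscr{J}}J_b$ iff $MaM\subseteq MbM$, and $J_a<_{\mathscr{J}}J_b$ iff $J_a\leqslant_{\mathscr{J}}J_b$ and $J_a\neq J_b$. For a $\mathscr{J}$-class $J$, $A(J)=\{a\in M: J_a<_{\mathscr{J}}J\}$, and $\theta_J$ is the relation: $a\,\theta_J\,b$ iff $a=b$, or $a,b\in A(J)$, or $a,b\in J$ and $a\mathscr{H}b$. *)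

theory Defs
  imports Main
begin

text \<open>The finite monoid M is the ambient type 'a :: {monoid_mult, finite}.\<close>

definition left_ideal :: "'a::monoid_mult \<Rightarrow> 'a set" where
  "left_ideal a = {x * a | x. True}"

definition right_ideal :: "'a::monoid_mult \<Rightarrow> 'a set" where
  "right_ideal a = {a * x | x. True}"

definition two_ideal :: "'a::monoid_mult \<Rightarrow> 'a set" where
  "two_ideal a = {x * a * y | x y. True}"

definition H_rel :: "'a::monoid_mult \<Rightarrow> 'a \<Rightarrow> bool" where
  "H_rel a b \<longleftrightarrow> left_ideal a = left_ideal b \<and> right_ideal a = right_ideal b"

definition J_rel :: "'a::monoid_mult \<Rightarrow> 'a \<Rightarrow> bool" where
  "J_rel a b \<longleftrightarrow> two_ideal a = two_ideal b"

definition J_class :: "'a::monoid_mult \<Rightarrow> 'a set" where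
  "J_class a = {b. J_rel a b}"

definition is_J_class :: "'a::monoid_mult set \<Rightarrow> bool" where
  "is_J_class J \<longleftrightarrow> (\<exists>a. J = J_class a)"

definition J_less :: "'a::monoid_mult set \<Rightarrow> 'a set \<Rightarrow> bool" where
  "J_less J1 J2 \<longleftrightarrow> (\<exists>a b. J1 = J_class a \<and> J2 = J_class b \<and>
       two_ideal a \<subseteq> two_ideal b \<and> J1 \<noteq> J2)"

definition A_set :: "'a::monoid_mult set \<Rightarrow> 'a set" where
  "A_set J = {a. J_less (J_class a) J}"

definition theta :: "'a::monoid_mult set \<Rightarrow> ('a \<times> 'a) set" where
  "theta J = {(a, b). a = b \<or> (a \<in> A_set J \<and> b \<in> A_set J) \<or> (a \<in> J \<and> b \<in> J \<and> H_rel a b)}"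

definition congruence :: "('a::monoid_mult \<times> 'a) set \<Rightarrow> bool" where
  "congruence R \<longleftrightarrow> equiv UNIV R \<and>
     (\<forall>a b c. (a, b) \<in> R \<longrightarrow> (c * a, c * b) \<in> R \<and> (a * c, b * c) \<in> R)"

end

theory Submission
  imports Defs
begin

lemma li_sub: "left_ideal a \<subseteq> left_ideal b \<longleftrightarrow> (\<exists>x. a = x * b)"
proof
  assume "left_ideal a \<subseteq> left_ideal b"
  moreover have "a \<in> left_ideal a" unfolding left_ideal_def by (metis (mono_tags) mem_Collect_eq mult_1_left)
  ultimately show "\<exists>x. a = x * b" unfolding left_ideal_def by blast
next
  assume "\<exists>x. a = x * b"
  then show "left_ideal a \<subseteq> left_ideal b" unfolding left_ideal_def by (auto simp: mult.assoc[symmetric])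
qed

lemma ri_sub: "right_ideal a \<subseteq> right_ideal b \<longleftrightarrow> (\<exists>x. a = b * x)"
proof
  assume "right_ideal a \<subseteq> right_ideal b"
  moreover have "a \<in> right_ideal a" unfolding right_ideal_def by (metis (mono_tags) mem_Collect_eq mult_1_right)
  ultimately show "\<exists>x. a = b * x" unfolding right_ideal_def by blast
next
  assume "\<exists>x. a = b * x"
  then show "right_ideal a \<subseteq> right_ideal b" unfolding right_ideal_def by (auto simp: mult.assoc)
qed

lemma ti_sub: "two_ideal a \<subseteq> two_ideal b \<longleftrightarrow> (\<exists>x y. a = x * b * y)"
proof
  assume "two_ideal a \<subseteq> two_ideal b"
  moreover have "a = 1 * a * 1" by simp
  then have "a \<in> two_ideal a" unfolding two_ideal_def by blast
  ultimately show "\<exists>x y. a = x * b * y" unfolding two_ideal_def by blast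
next
  assume "\<exists>x y. a = x * b * y"
  then obtain x y where "a = x * b * y" by blast
  then have "u * a * v = (u * x) * b * (y * v)" for u v by (simp add: mult.assoc)
  then show "two_ideal a \<subseteq> two_ideal b" unfolding two_ideal_def by blast
qed

lemma ti_left: "two_ideal (c * a) \<subseteq> two_ideal a"
  unfolding ti_sub by (metis mult_1_right)

lemma ti_right: "two_ideal (a * c) \<subseteq> two_ideal a"
  unfolding ti_sub by (metis mult_1_left)

lemma ri_ti: "right_ideal a = right_ideal b \<Longrightarrow> two_ideal a = two_ideal b"
proof -
  assume "right_ideal a = right_ideal b"
  then obtain x y where "a = b * x" "b = a * y" using ri_sub by (metis order_refl)
  then show ?thesis using ti_right by (metis subset_antisym)
qed

lemma li_ti: "left_ideal a = left_ideal b \<Longrightarrow> two_ideal a = two_ideal b"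
proof -
  assume "left_ideal a = left_ideal b"
  then obtain x y where "a = x * b" "b = y * a" using li_sub by (metis order_refl)
  then show ?thesis using ti_left by (metis subset_antisym)
qed

lemma pow_period:
  fixes s :: "'a::monoid_mult"
  assumes "s ^ i = s ^ (i + d)"
  shows "s ^ (i + m * d) = s ^ i"
proof (induction m)
  case 0 then show ?case by simp
next
  case (Suc m)
  have "s ^ (i + Suc m * d) = s ^ (i + m * d) * s ^ d"
    by (simp add: power_add[symmetric] algebra_simps)
  also have "\<dots> = s ^ i * s ^ d" using Suc by simp
  also have "\<dots> = s ^ i" using assms by (simp add: power_add)
  finally show ?case .
qed

lemma idem_pow:
  fixes s :: "'a::{monoid_mult,finite}"
  shows "\<exists>N>0. s ^ N * s ^ N = s ^ N"
proof -
  have "\<not> inj (\<lambda>n::nat. s ^ n)"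
    using finite_UNIV infinite_UNIV_nat finite_imageD
    by (metis finite_subset subset_UNIV)
  then obtain i j :: nat where ij: "i \<noteq> j" "s ^ i = s ^ j"
    unfolding inj_def by blast
  then obtain i d where d: "d > 0" "s ^ i = s ^ (i + d)"
    by (metis less_imp_add_positive nat_neq_iff)
  define N where "N = (i + 1) * d"
  have "i \<le> d * i" using d by (cases d) auto
  moreover have "N = d * i + d" by (simp add: N_def algebra_simps)
  ultimately have N: "N \<ge> i" "N > 0" using d by linarith+
  have ee: "N + N = (i + (i+1) * d) + (N - i)" using N unfolding N_def by simp
  have "s ^ N * s ^ N = s ^ (i + (i+1) * d) * s ^ (N - i)"
    unfolding power_add[symmetric] ee ..
  also have "\<dots> = s ^ i * s ^ (N - i)" using pow_period[OF d(2), of "i+1"] by simp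
  also have "\<dots> = s ^ N" using N by (simp add: power_add[symmetric])
  finally show ?thesis using N by blast
qed

lemma stab_left:
  fixes x y :: "'a::{monoid_mult,finite}"
  assumes "two_ideal (y * x) = two_ideal x"
  shows "left_ideal (y * x) = left_ideal x"
proof -
  obtain p q where pq: "x = p * (y * x) * q"
    using assms ti_sub[of x "y * x"] by auto
  have pw: "x = (p * y) ^ n * x * q ^ n" for n
  proof (induction n)
    case 0 then show ?case by simp
  next
    case (Suc n)
    have "x = (p * y) ^ n * (p * (y * x) * q) * q ^ n" using Suc pq by simp
    also have "\<dots> = (p * y) ^ Suc n * x * q ^ Suc n"
    proof -
      have e1: "(p*y)^Suc n = (p*y)^n * (p*y)" by (rule power_Suc2)
      have e2: "q^Suc n = q * q^n" by (rule power_Suc)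
      show ?thesis by (simp only: e1 e2 mult.assoc)
    qed
    finally show ?case .
  qed
  obtain N where N: "N > 0" "(p*y) ^ N * (p*y) ^ N = (p*y) ^ N" using idem_pow by blast
  have "(p*y) ^ N * x = (p*y) ^ N * ((p * y) ^ N * x * q ^ N)" using pw[of N] by simp
  also have "\<dots> = (p * y) ^ N * x * q ^ N" using N by (simp add: mult.assoc[symmetric])
  also have "\<dots> = x" using pw[of N] by simp
  finally have ex: "(p*y) ^ N * x = x" .
  obtain M where M: "N = Suc M" using N by (cases N) auto
  have e1: "(p*y)^Suc M = (p*y)^M * (p*y)" by (rule power_Suc2)
  have "x = ((p*y) ^ M * p) * (y * x)" using ex M by (simp only: e1 mult.assoc)
  then show ?thesis
    by (metis li_sub subset_antisym)
qed

lemma stab_right: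
  fixes x y :: "'a::{monoid_mult,finite}"
  assumes "two_ideal (x * y) = two_ideal x"
  shows "right_ideal (x * y) = right_ideal x"
proof -
  obtain p q where pq: "x = p * (x * y) * q"
    using assms ti_sub[of x "x * y"] by auto
  have pw: "x = p ^ n * x * (y * q) ^ n" for n
  proof (induction n)
    case 0 then show ?case by simp
  next
    case (Suc n)
    have "x = p ^ n * (p * (x * y) * q) * (y * q) ^ n" using Suc pq by simp
    also have "\<dots> = p ^ Suc n * x * (y * q) ^ Suc n"
    proof -
      have e1: "p^Suc n = p^n * p" by (rule power_Suc2)
      have e2: "(y*q)^Suc n = (y*q) * (y*q)^n" by (rule power_Suc)
      show ?thesis by (simp only: e1 e2 mult.assoc)
    qed
    finally show ?case .
  qed
  obtain N where N: "N > 0" "(y*q) ^ N * (y*q) ^ N = (y*q) ^ N" using idem_pow by blast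
  have "x * (y*q) ^ N = (p ^ N * x * (y * q) ^ N) * (y*q) ^ N" using pw[of N] by simp
  also have "\<dots> = p ^ N * x * (y * q) ^ N" using N by (simp add: mult.assoc)
  also have "\<dots> = x" using pw[of N] by simp
  finally have ex: "x * (y*q) ^ N = x" .
  obtain M where M: "N = Suc M" using N by (cases N) auto
  have e1: "(y*q)^Suc M = (y*q) * (y*q)^M" by (rule power_Suc)
  have "x = (x * y) * (q * (y*q) ^ M)" using ex M by (simp only: e1 mult.assoc)
  then show ?thesis
    by (metis ri_sub subset_antisym)
qed

lemma Jc_eq: "J_class a = J_class b \<longleftrightarrow> two_ideal a = two_ideal b"
proof
  assume "J_class a = J_class b"
  moreover have "a \<in> J_class a" by (simp add: J_class_def J_rel_def)
  ultimately show "two_ideal a = two_ideal b" by (simp add: J_class_def J_rel_def)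
qed (simp add: J_class_def J_rel_def)

lemma A_char: "A_set (J_class j) = {x. two_ideal x \<subset> two_ideal j}"
proof -
  have "J_less (J_class x) (J_class j) \<longleftrightarrow> two_ideal x \<subset> two_ideal j" for x :: 'a
    unfolding J_less_def Jc_eq by blast
  then show ?thesis unfolding A_set_def by blast
qed

lemma theta_char:
  "(a, b) \<in> theta (J_class j) \<longleftrightarrow> a = b \<or>
     (two_ideal a \<subset> two_ideal j \<and> two_ideal b \<subset> two_ideal j) \<or>
     (two_ideal a = two_ideal j \<and> two_ideal b = two_ideal j \<and> H_rel a b)"
proof -
  have "x \<in> J_class j \<longleftrightarrow> two_ideal x = two_ideal j" for x :: 'a
    by (auto simp: J_class_def J_rel_def)
  then show ?thesis unfolding theta_def A_char by auto
qed

lemma Jc_mem: "x \<in> J_class j \<longleftrightarrow> two_ideal x = two_ideal j"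
  by (auto simp: J_class_def J_rel_def)

lemma li_mult: "left_ideal a = left_ideal b \<Longrightarrow> left_ideal (a * c) = left_ideal (b * c)"
proof -
  assume "left_ideal a = left_ideal b"
  then obtain x y where "a = x * b" "b = y * a" using li_sub by (metis order_refl)
  then have "a * c = x * (b * c)" "b * c = y * (a * c)" by (metis mult.assoc)+
  then show ?thesis using li_sub by (metis subset_antisym)
qed

lemma ri_mult: "right_ideal a = right_ideal b \<Longrightarrow> right_ideal (c * a) = right_ideal (c * b)"
proof -
  assume "right_ideal a = right_ideal b"
  then obtain x y where "a = b * x" "b = a * y" using ri_sub by (metis order_refl)
  then have "c * a = (c * b) * x" "c * b = (c * a) * y" by (metis mult.assoc)+
  then show ?thesis using ri_sub by (metis subset_antisym)
qed

lemma theta_left: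
  fixes a b c :: "'a::{monoid_mult,finite}"
  assumes "(a, b) \<in> theta (J_class j)"
  shows "(c * a, c * b) \<in> theta (J_class j)"
proof -
  have cs: "a = b \<or> (two_ideal a \<subset> two_ideal j \<and> two_ideal b \<subset> two_ideal j)
    \<or> (two_ideal a = two_ideal j \<and> two_ideal b = two_ideal j \<and> H_rel a b)"
    using assms unfolding theta_char .
  consider "a = b" | "two_ideal a \<subset> two_ideal j \<and> two_ideal b \<subset> two_ideal j"
    | "two_ideal a = two_ideal j \<and> two_ideal b = two_ideal j \<and> H_rel a b"
    using cs by argo
  then show ?thesis
  proof cases
    case 1 then show ?thesis by (simp add: theta_def)
  next
    case 2
    have "two_ideal (c*a) \<subset> two_ideal j" "two_ideal (c*b) \<subset> two_ideal j"
      using 2 ti_left[of c a] ti_left[of c b] by blast+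
    then show ?thesis unfolding theta_char by blast
  next
    case 3
    have R: "right_ideal (c*a) = right_ideal (c*b)" using 3 ri_mult unfolding H_rel_def by blast
    have T: "two_ideal (c*a) = two_ideal (c*b)" using ri_ti[OF R] .
    show ?thesis
    proof (cases "two_ideal (c*a) = two_ideal j")
      case True
      have e1: "two_ideal (c*a) = two_ideal a" using True 3 by simp
      have e2: "two_ideal (c*b) = two_ideal b" using True T 3 by simp
      have "left_ideal (c*a) = left_ideal (c*b)"
        using stab_left[OF e1] stab_left[OF e2] 3 unfolding H_rel_def by simp
      then have "H_rel (c*a) (c*b)" using R unfolding H_rel_def by simp
      then show ?thesis unfolding theta_char using True T by simp
    next
      case False
      have "two_ideal (c*a) \<subset> two_ideal j" using False 3 ti_left[of c a] by blast
      then show ?thesis unfolding theta_char using T by simp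
    qed
  qed
qed

lemma theta_right:
  fixes a b c :: "'a::{monoid_mult,finite}"
  assumes "(a, b) \<in> theta (J_class j)"
  shows "(a * c, b * c) \<in> theta (J_class j)"
proof -
  have cs: "a = b \<or> (two_ideal a \<subset> two_ideal j \<and> two_ideal b \<subset> two_ideal j)
    \<or> (two_ideal a = two_ideal j \<and> two_ideal b = two_ideal j \<and> H_rel a b)"
    using assms unfolding theta_char .
  consider "a = b" | "two_ideal a \<subset> two_ideal j \<and> two_ideal b \<subset> two_ideal j"
    | "two_ideal a = two_ideal j \<and> two_ideal b = two_ideal j \<and> H_rel a b"
    using cs by argo
  then show ?thesis
  proof cases
    case 1 then show ?thesis by (simp add: theta_def)
  next
    case 2
    have "two_ideal (a*c) \<subset> two_ideal j" "two_ideal (b*c) \<subset> two_ideal j"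
      using 2 ti_right[of a c] ti_right[of b c] by blast+
    then show ?thesis unfolding theta_char by blast
  next
    case 3
    have L: "left_ideal (a*c) = left_ideal (b*c)" using 3 li_mult unfolding H_rel_def by blast
    have T: "two_ideal (a*c) = two_ideal (b*c)" using li_ti[OF L] .
    show ?thesis
    proof (cases "two_ideal (a*c) = two_ideal j")
      case True
      have e1: "two_ideal (a*c) = two_ideal a" using True 3 by simp
      have e2: "two_ideal (b*c) = two_ideal b" using True T 3 by simp
      have "right_ideal (a*c) = right_ideal (b*c)"
        using stab_right[OF e1] stab_right[OF e2] 3 unfolding H_rel_def by simp
      then have "H_rel (a*c) (b*c)" using L unfolding H_rel_def by simp
      then show ?thesis unfolding theta_char using True T by simp
    next
      case False
      have "two_ideal (a*c) \<subset> two_ideal j" using False 3 ti_right[of a c] by blast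
      then show ?thesis unfolding theta_char using T by simp
    qed
  qed
qed

theorem lemma3p5:
  fixes J J' :: "'a::{monoid_mult, finite} set"
  assumes "is_J_class J" and "is_J_class J'"
    and "A_set J = A_set J'"
  shows "congruence (theta J \<union> theta J')"
proof -
  obtain j where j1: "J = J_class j" using assms(1) unfolding is_J_class_def by (elim exE)
  obtain j' where j2: "J' = J_class j'" using assms(2) unfolding is_J_class_def by (elim exE)
  note jj = j1 j2
  have AJ: "A_set J \<inter> J = {}" unfolding jj A_char by (auto simp: Jc_mem)
  have AJ': "A_set J \<inter> J' = {}" unfolding assms(3) unfolding jj A_char by (auto simp: Jc_mem)
  have JJ: "J = J' \<or> J \<inter> J' = {}"
  proof (cases "J \<inter> J' = {}")
    case False
    then obtain x where "x \<in> J_class j" "x \<in> J_class j'" using jj by blast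
    then have "two_ideal j = two_ideal j'" by (simp add: Jc_mem)
    then show ?thesis using jj Jc_eq by blast
  qed simp
  have Hs: "H_rel a b \<Longrightarrow> H_rel b a" for a b :: 'a by (auto simp: H_rel_def)
  have Ht: "H_rel a b \<Longrightarrow> H_rel b c \<Longrightarrow> H_rel a c" for a b c :: 'a by (auto simp: H_rel_def)
  have eq: "equiv UNIV (theta J \<union> theta J')"
    unfolding equiv_def refl_on_def sym_def trans_def
  proof (intro conjI allI impI)
    fix x y z
    assume "(x, y) \<in> theta J \<union> theta J'" "(y, z) \<in> theta J \<union> theta J'"
    then have xy: "x = y \<or> (x \<in> A_set J \<and> y \<in> A_set J) \<or> (x \<in> J \<and> y \<in> J \<and> H_rel x y)
        \<or> (x \<in> J' \<and> y \<in> J' \<and> H_rel x y)"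
      and yz: "y = z \<or> (y \<in> A_set J \<and> z \<in> A_set J) \<or> (y \<in> J \<and> z \<in> J \<and> H_rel y z)
        \<or> (y \<in> J' \<and> z \<in> J' \<and> H_rel y z)"
      unfolding theta_def assms(3) by blast+
    have "x = z \<or> (x \<in> A_set J \<and> z \<in> A_set J) \<or> (x \<in> J \<and> z \<in> J \<and> H_rel x z)
        \<or> (x \<in> J' \<and> z \<in> J' \<and> H_rel x z)"
      using xy
    proof (elim disjE conjE)
      assume "x = y" then show ?thesis using yz by simp
    next
      assume a: "x \<in> A_set J" "y \<in> A_set J"
      then have "y \<notin> J" "y \<notin> J'" using AJ AJ' by blast+
      then show ?thesis using yz a by blast
    next
      assume a: "x \<in> J" "y \<in> J" "H_rel x y"
      then have "y \<notin> A_set J" using AJ by blast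
      moreover have "y \<in> J' \<Longrightarrow> J = J'" using JJ a by blast
      ultimately show ?thesis using yz a Ht by blast
    next
      assume a: "x \<in> J'" "y \<in> J'" "H_rel x y"
      then have "y \<notin> A_set J" using AJ' by blast
      moreover have "y \<in> J \<Longrightarrow> J = J'" using JJ a by blast
      ultimately show ?thesis using yz a Ht by blast
    qed
    then show "(x, z) \<in> theta J \<union> theta J'"
      unfolding theta_def assms(3) by blast
  qed (auto simp: theta_def Hs)
  have "(c * a, c * b) \<in> theta J \<union> theta J' \<and> (a * c, b * c) \<in> theta J \<union> theta J'"
    if "(a, b) \<in> theta J \<union> theta J'" for a b c
  proof (cases "(a, b) \<in> theta J")
    case True
    then show ?thesis unfolding jj using theta_left theta_right by blast
  next
    case False
    then have "(a, b) \<in> theta J'" using that by blast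
    then show ?thesis unfolding jj using theta_left theta_right by blast
  qed
  then show ?thesis
    unfolding congruence_def using eq by blast
qed

end
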